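(* Let $a$ be a global-in-time solution of $$\partial_t a+\Big(\int_{-\pi}^x a(t,\bar x)\,d\bar x\Big)\partial_x a-a^2+\frac1\pi\int_{-\pi}^{\pi}a^2\,dx=0,\qquad \int_{-\pi}^\pi a(t,x)dx=0,\qquad x\in[-\pi,\pi],$$ such that $a(t,\cdot)$ is even for all $t\ge0$, and assume that $\|a(t,\cdot)-\mu\cos(\cdot)\|_{L^\infty([-\pi,\pi])}\to0$ as $t\to\infty$ for some $\mu>0$. Then for all $\kappa_0>0$ and $\delta\in(0,\frac1\mu)$ there exists $\kappa\in(0,\kappa_0)$ such that if $0<|z_0|\le\kappa$ then the characteristic $z$ starting from $z_0$ satisfies $$|z(t)|\le\kappa_0\qquad\text{for all }0\le t\le t_0:=\Big(\frac1\mu-\delta\Big)\ln\Big(\frac{\kappa_0}{|z_0|}\Big).$$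
   Context: The characteristic starting from $z_0$ is the solution of $\dot z(t)=\int_{-\pi}^{z(t)}a(t,x)\,dx$, $z(0)=z_0$. *)

theory Defs
  imports "HOL-Analysis.Analysis"
begin

definition is_global_solution ::
  "(real \<Rightarrow> real \<Rightarrow> real) \<Rightarrow> (real \<Rightarrow> real \<Rightarrow> real) \<Rightarrow> (real \<Rightarrow> real \<Rightarrow> real) \<Rightarrow> bool" where
  "is_global_solution a dta dxa \<longleftrightarrow>
     continuous_on ({0..} \<times> {-pi..pi}) (\<lambda>(t, x). a t x) \<and>
     (\<forall>t\<ge>0. \<forall>x\<in>{-pi..pi}.
        ((\<lambda>s. a s x) has_real_derivative dta t x) (at t within {0..}) \<and>
        ((\<lambda>y. a t y) has_real_derivative dxa t x) (at x within {-pi..pi}) \<and>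
        dta t x + integral {-pi..x} (a t) * dxa t x - (a t x)^2
          + (1/pi) * integral {-pi..pi} (\<lambda>y. (a t y)^2) = 0) \<and>
     (\<forall>t\<ge>0. integral {-pi..pi} (a t) = 0)"

definition characteristic :: "(real \<Rightarrow> real \<Rightarrow> real) \<Rightarrow> real \<Rightarrow> (real \<Rightarrow> real) \<Rightarrow> bool" where
  "characteristic a z0 z \<longleftrightarrow>
     z 0 = z0 \<and>
     (\<forall>t\<ge>0. z t \<in> {-pi..pi} \<and>
        (z has_real_derivative integral {-pi..z t} (a t)) (at t within {0..}))"

end

theory Submission imports Defs begin

lemma growth:
  fixes z u :: "real \<Rightarrow> real"
  assumes deriv: "\<forall>t\<ge>0. (z has_real_derivative u t) (at t within {0..})"
    and bnd: "\<forall>t\<in>{t1..t2}. \<bar>u t\<bar> \<le> K * \<bar>z t\<bar>" and t1: "0 \<le> t1" "t1 \<le> t2" and K: "0 \<le> K"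
  shows "\<bar>z t2\<bar> \<le> \<bar>z t1\<bar> * exp (K*(t2-t1))"
proof -
  define h where "h t = (z t)^2 * exp (-2*K*t)" for t
  have "h t2 \<le> h t1"
  proof (rule DERIV_nonpos_imp_decreasing_open[OF t1(2)])
    fix x assume x: "t1 < x" "x < t2"
    have "(z has_real_derivative u x) (at x)"
      using deriv[rule_format, of x] x t1 at_within_interior[of x "{0..}"] by simp
    then have "(h has_real_derivative (2 * z x * u x * exp (-2*K*x) + (z x)^2 * (exp (-2*K*x) * (-2*K)))) (at x)"
      unfolding h_def by (auto intro!: derivative_eq_intros)
    moreover have "2 * z x * u x * exp (-2*K*x) + (z x)^2 * (exp (-2*K*x) * (-2*K)) \<le> 0"
    proof -
      have "z x * u x \<le> \<bar>z x\<bar> * \<bar>u x\<bar>" by (metis abs_ge_self abs_mult)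
      also have "\<dots> \<le> \<bar>z x\<bar> * (K * \<bar>z x\<bar>)" using bnd x by (intro mult_left_mono) auto
      also have "\<dots> = K * (z x)^2" by (simp add: power2_eq_square)
      finally have "z x * u x \<le> K * (z x)^2" .
      then have "2 * (z x * u x) * exp (-2*K*x) \<le> 2 * (K * (z x)^2) * exp (-2*K*x)" by simp
      then show ?thesis by (simp add: algebra_simps)
    qed
    ultimately show "\<exists>y. (h has_real_derivative y) (at x) \<and> y \<le> 0" by blast
  next
    have "continuous_on {t1..t2} z"
      unfolding continuous_on_eq_continuous_within
    proof
      fix x assume x: "x \<in> {t1..t2}"
      then have "continuous (at x within {0..}) z" using deriv t1 by (intro DERIV_continuous[of _ "u x"]) auto
      then show "continuous (at x within {t1..t2}) z"
        by (rule continuous_within_subset) (use t1 in auto)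
    qed
    then show "continuous_on {t1..t2} h" unfolding h_def by (intro continuous_intros)
  qed
  then have "(z t2)^2 \<le> (z t1)^2 * exp (2*K*(t2-t1))"
    unfolding h_def by (simp add: field_simps exp_diff exp_minus) 
  also have "\<dots> = (\<bar>z t1\<bar> * exp (K*(t2-t1)))^2"
  proof -
    have "exp (2*K*(t2-t1)) = exp (K*(t2-t1))^2"
      using exp_double[of "K*(t2-t1)"] by (simp add: mult.assoc)
    then show ?thesis by (simp add: power_mult_distrib)
  qed
  finally have "\<bar>z t2\<bar> \<le> \<bar>\<bar>z t1\<bar> * exp (K*(t2-t1))\<bar>"
    by (simp only: abs_le_square_iff)
  then show ?thesis by simp
qed
lemma vel:
  fixes f :: "real \<Rightarrow> real"
  assumes cont: "continuous_on {-pi..pi} f" and even: "\<forall>x\<in>{-pi..pi}. f (-x) = f x"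
    and mean: "integral {-pi..pi} f = 0" and y: "y \<in> {-pi..pi}"
    and bnd: "\<forall>x\<in>{-pi..pi}. \<bar>f x\<bar> \<le> K"
  shows "\<bar>integral {-pi..y} f\<bar> \<le> K * \<bar>y\<bar>"
proof -
  have int: "f integrable_on {-pi..pi}" using cont integrable_continuous_real by blast
  have c: "integral {-pi..0} f + integral {0..pi} f = 0"
    using Henstock_Kurzweil_Integration.integral_combine[OF _ _ int, of 0] mean by simp
  have "integral {0..pi} f = integral {-pi..-0} (\<lambda>x. f (-x))"
    by (rule Henstock_Kurzweil_Integration.integral_reflect_real[symmetric])
  also have "\<dots> = integral {-pi..0} f"
    unfolding minus_zero by (rule integral_cong) (use even in force)
  finally have z0: "integral {-pi..0} f = 0" using c by simp
  show ?thesis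
  proof (cases "y \<ge> 0")
    case True
    have "integral {-pi..0} f + integral {0..y} f = integral {-pi..y} f"
      using True y by (intro Henstock_Kurzweil_Integration.integral_combine integrable_continuous_real
          continuous_on_subset[OF cont]) auto
    then have "integral {-pi..y} f = integral {0..y} f" using z0 by simp
    moreover have "norm (integral {0..y} f) \<le> K * (y - 0)"
      using True y bnd by (intro integral_bound continuous_on_subset[OF cont]) auto
    ultimately show ?thesis using True by simp
  next
    case False
    have "integral {-pi..y} f + integral {y..0} f = integral {-pi..0} f"
      using False y by (intro Henstock_Kurzweil_Integration.integral_combine integrable_continuous_real
          continuous_on_subset[OF cont]) auto
    then have "integral {-pi..y} f = - integral {y..0} f" using z0 by simp
    moreover have "norm (integral {y..0} f) \<le> K * (0 - y)"
      using False y bnd by (intro integral_bound continuous_on_subset[OF cont]) auto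
    ultimately show ?thesis using False by simp
  qed
qed

theorem lemma6p1:
  fixes a dta dxa :: "real \<Rightarrow> real \<Rightarrow> real" and \<mu> :: real
  assumes sol: "is_global_solution a dta dxa"
    and even: "\<forall>t\<ge>0. \<forall>x\<in>{-pi..pi}. a t (-x) = a t x"
    and mu_pos: "\<mu> > 0"
    and conv: "((\<lambda>t. SUP x\<in>{-pi..pi}. \<bar>a t x - \<mu> * cos x\<bar>) \<longlongrightarrow> 0) at_top"
  shows "\<forall>\<kappa>0 > 0. \<forall>\<delta>. 0 < \<delta> \<and> \<delta> < 1 / \<mu> \<longrightarrow>
           (\<exists>\<kappa>. 0 < \<kappa> \<and> \<kappa> < \<kappa>0 \<and>
              (\<forall>z0 z. 0 < \<bar>z0\<bar> \<and> \<bar>z0\<bar> \<le> \<kappa> \<and> characteristic a z0 z \<longrightarrow>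
                 (\<forall>t. 0 \<le> t \<and> t \<le> (1 / \<mu> - \<delta>) * ln (\<kappa>0 / \<bar>z0\<bar>) \<longrightarrow> \<bar>z t\<bar> \<le> \<kappa>0)))"
proof (intro allI impI)
  fix \<kappa>0 \<delta> :: real
  assume k0: "\<kappa>0 > 0" and d: "0 < \<delta> \<and> \<delta> < 1 / \<mu>"
  define q where "q = 1 / \<mu> - \<delta>"
  have q: "q > 0" "q * \<mu> < 1" using d mu_pos unfolding q_def by (auto simp: field_simps)
  define L where "L = (\<mu> + 1 / q) / 2"
  have L: "L > \<mu>" "L * q < 1"
    using q mu_pos unfolding L_def by (auto simp: field_simps)
  define p where "p = L * q"
  have p: "0 < p" "p < 1" using L q mu_pos unfolding p_def by auto
  have contA: "continuous_on ({0..} \<times> {-pi..pi}) (\<lambda>(t, x). a t x)"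
    and dx: "\<forall>t\<ge>0. \<forall>x\<in>{-pi..pi}. ((\<lambda>y. a t y) has_real_derivative dxa t x) (at x within {-pi..pi})"
    and mean: "\<forall>t\<ge>0. integral {-pi..pi} (a t) = 0"
    using sol unfolding is_global_solution_def by auto
  have cont_t: "continuous_on {-pi..pi} (a t)" if "t \<ge> 0" for t
    unfolding continuous_on_eq_continuous_within
  proof
    fix x assume "x \<in> {-pi..pi}"
    then show "continuous (at x within {-pi..pi}) (a t)"
      using dx that by (intro DERIV_continuous[of _ "dxa t x"]) auto
  qed
  have "\<forall>\<^sub>F t in at_top. (SUP x\<in>{-pi..pi}. \<bar>a t x - \<mu> * cos x\<bar>) < L - \<mu>"
    using order_tendstoD(2)[OF conv] L by simp
  then obtain T0 where T0: "\<And>t. t \<ge> T0 \<Longrightarrow> (SUP x\<in>{-pi..pi}. \<bar>a t x - \<mu> * cos x\<bar>) < L - \<mu>"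
    unfolding eventually_at_top_linorder by blast
  define T where "T = max T0 0"
  have T: "T \<ge> 0" unfolding T_def by simp
  have bndL: "\<bar>a t x\<bar> \<le> L" if t: "t \<ge> T" and x: "x \<in> {-pi..pi}" for t x
  proof -
    have t0: "t \<ge> 0" "t \<ge> T0" using t unfolding T_def by auto
    have "continuous_on {-pi..pi} (\<lambda>x. \<bar>a t x - \<mu> * cos x\<bar>)"
      using cont_t[OF t0(1)] by (intro continuous_intros)
    then have "compact ((\<lambda>x. \<bar>a t x - \<mu> * cos x\<bar>) ` {-pi..pi})"
      by (intro compact_continuous_image) auto
    then have "bdd_above ((\<lambda>x. \<bar>a t x - \<mu> * cos x\<bar>) ` {-pi..pi})"
      by (intro bounded_imp_bdd_above compact_imp_bounded)
    then have "\<bar>a t x - \<mu> * cos x\<bar> \<le> (SUP x\<in>{-pi..pi}. \<bar>a t x - \<mu> * cos x\<bar>)"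
      using x by (intro cSUP_upper) auto
    also have "\<dots> < L - \<mu>" using T0 t0 by auto
    finally have 1: "\<bar>a t x - \<mu> * cos x\<bar> < L - \<mu>" .
    have "\<bar>\<mu> * cos x\<bar> \<le> \<mu>" using mu_pos by (simp add: abs_mult)
    with 1 show ?thesis by linarith
  qed
  have "compact ((\<lambda>(t, x). a t x) ` ({0..T} \<times> {-pi..pi}))"
    by (intro compact_continuous_image continuous_on_subset[OF contA] compact_Times) auto
  then obtain B where B: "B > 0" "\<forall>y\<in>(\<lambda>(t, x). a t x) ` ({0..T} \<times> {-pi..pi}). norm y \<le> B"
    using compact_imp_bounded bounded_pos by metis
  define M where "M = B"
  have M: "M \<ge> 0" "\<And>t x. t \<in> {0..T} \<Longrightarrow> x \<in> {-pi..pi} \<Longrightarrow> \<bar>a t x\<bar> \<le> M"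
    using B unfolding M_def by force+
  define \<kappa> where "\<kappa> = \<kappa>0 * exp (-(M*T)/(1-p)) / 2"
  have MT: "M*T/(1-p) \<ge> M*T" using p M T by (simp add: field_simps)
  have ex1: "exp (-(M*T)/(1-p)) \<le> 1" using M T p by simp
  show "\<exists>\<kappa>. 0 < \<kappa> \<and> \<kappa> < \<kappa>0 \<and>
              (\<forall>z0 z. 0 < \<bar>z0\<bar> \<and> \<bar>z0\<bar> \<le> \<kappa> \<and> characteristic a z0 z \<longrightarrow>
                 (\<forall>t. 0 \<le> t \<and> t \<le> (1 / \<mu> - \<delta>) * ln (\<kappa>0 / \<bar>z0\<bar>) \<longrightarrow> \<bar>z t\<bar> \<le> \<kappa>0))"
  proof (intro exI[of _ \<kappa>] conjI allI impI)
    show kpos: "0 < \<kappa>" unfolding \<kappa>_def using k0 by simp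
    have "\<kappa>0 * exp (-(M*T)/(1-p)) \<le> \<kappa>0 * 1" using k0 ex1 by (intro mult_left_mono) auto
    then show "\<kappa> < \<kappa>0" unfolding \<kappa>_def using k0 by linarith
    fix z0 z t
    assume A: "0 < \<bar>z0\<bar> \<and> \<bar>z0\<bar> \<le> \<kappa> \<and> characteristic a z0 z"
    assume tA: "0 \<le> t \<and> t \<le> (1 / \<mu> - \<delta>) * ln (\<kappa>0 / \<bar>z0\<bar>)"
    have zc: "z 0 = z0" "\<forall>t\<ge>0. z t \<in> {-pi..pi} \<and>
        (z has_real_derivative integral {-pi..z t} (a t)) (at t within {0..})"
      using A unfolding characteristic_def by auto
    have deriv: "\<forall>t\<ge>0. (z has_real_derivative integral {-pi..z t} (a t)) (at t within {0..})"
      using zc by auto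
    have velb: "\<bar>integral {-pi..z s} (a s)\<bar> \<le> K * \<bar>z s\<bar>"
      if "s \<ge> 0" "\<forall>x\<in>{-pi..pi}. \<bar>a s x\<bar> \<le> K" for s K
      using vel[OF cont_t[OF that(1)], where y="z s" and K=K] even mean zc that by auto
    have ph1: "\<bar>z s\<bar> \<le> \<bar>z0\<bar> * exp (M * s)" if s: "s \<in> {0..T}" for s
      using growth[OF deriv, of 0 s M] velb M s zc(1) by auto
    have k0T: "\<kappa> * exp (M*T) \<le> \<kappa>0"
    proof -
      have "\<kappa> * exp (M*T) = \<kappa>0 * exp (M*T - M*T/(1-p)) / 2"
        unfolding \<kappa>_def by (simp add: exp_diff field_simps exp_minus)
      also have "\<dots> \<le> \<kappa>0 * 1 / 2" using MT k0 by (intro divide_right_mono mult_left_mono) auto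
      finally show ?thesis using k0 by simp
    qed
    show "\<bar>z t\<bar> \<le> \<kappa>0"
    proof (cases "t \<le> T")
      case True
      have "\<bar>z t\<bar> \<le> \<bar>z0\<bar> * exp (M * t)" using ph1 True tA by auto
      also have "\<dots> \<le> \<kappa> * exp (M*T)"
        using A True M by (intro mult_mono) (auto intro: mult_left_mono)
      finally show ?thesis using k0T by simp
    next
      case False
      have "\<bar>z t\<bar> \<le> \<bar>z T\<bar> * exp (L * (t - T))"
        using growth[OF deriv, of T t L] velb bndL False T L mu_pos by auto
      also have "\<dots> \<le> \<bar>z0\<bar> * exp (M * T) * exp (L * (t - T))"
        using ph1[of T] T by (intro mult_right_mono) auto
      also have "\<dots> \<le> \<bar>z0\<bar> * exp (M * T) * exp (L * t)"
        using T L mu_pos A by (intro mult_left_mono) auto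
      also have "\<dots> = exp (ln \<bar>z0\<bar> + M * T + L * t)"
        using A by (simp add: exp_add)
      also have "\<dots> \<le> exp (ln \<kappa>0)"
      proof -
        have lq: "ln (\<kappa>0 / \<bar>z0\<bar>) = ln \<kappa>0 - ln \<bar>z0\<bar>" using A k0 by (simp add: ln_div)
        have "L * t \<le> L * (q * ln (\<kappa>0 / \<bar>z0\<bar>))"
          using tA L mu_pos unfolding q_def by (intro mult_left_mono) auto
        then have Lt: "L * t \<le> p * (ln \<kappa>0 - ln \<bar>z0\<bar>)" unfolding p_def lq by simp
        have lk: "ln \<kappa> = ln \<kappa>0 - M*T/(1-p) - ln 2"
          unfolding \<kappa>_def using k0 by (simp add: ln_div ln_mult)
        have "ln \<bar>z0\<bar> \<le> ln \<kappa>" using A kpos by simp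
        then have "(1-p) * ln \<bar>z0\<bar> \<le> (1-p) * ln \<kappa>" using p by (intro mult_left_mono) auto
        also have "\<dots> = (1-p) * ln \<kappa>0 - M*T - (1-p) * ln 2"
          unfolding lk using p by (simp add: field_simps)
        finally have f1: "ln \<bar>z0\<bar> - p * ln \<bar>z0\<bar> \<le> ln \<kappa>0 - p * ln \<kappa>0 - M*T - (ln 2 - p * ln 2)"
          by (simp add: algebra_simps)
        have f2: "p * ln 2 \<le> ln 2" using p by (intro mult_left_le_one_le) auto
        have f3: "L * t \<le> p * ln \<kappa>0 - p * ln \<bar>z0\<bar>" using Lt by (simp add: algebra_simps)
        have "ln \<bar>z0\<bar> + M * T + L * t \<le> ln \<kappa>0"
          using f1 f2 f3 by linarith
        then show ?thesis by simp
      qed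
      also have "\<dots> = \<kappa>0" using k0 by simp
      finally show ?thesis .
    qed
  qed
qed

end
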